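(* Let $t<u$ be $b$-imal numbers in $[0,1]$ and let $l'\ge0$ be such that $b^{l'}t$ and $b^{l'}u$ are integers. Then for every $k\ge l'$, $\mu_k([t,u))=b(u-t)$. Moreover, for every interval $I\subset[0,1)$, $\lim_{k\to\infty}\mu_k(I)=b\,|I|$, where $|I|=\sup I-\inf I$.
   Context: Fix $b\ge2$ and $d\in\{0,\dots,b-1\}$. A $b$-imal number is an element of $\bigcup_{l\ge0}b^{-l}\mathbb Z$. A string is a finite sequence $X=(d_l,\dots,d_1)$ of digits in $\{0,\dots,b-1\}$ (leading zeros allowed), of length $|X|=l\ge0$; its value is $n(X)=\sum_{i=1}^{l}d_ib^{i-1}$ ($0$ for the empty string). For $k\ge0$, $\mu_k=\sum_{X}b^{-|X|}\delta_{n(X)/b^{|X|}}$, the sum over all strings $X$ containing $d$ exactly $k$ times (masses at the same point add); it is a measure on $[0,1)$ of total mass $b$. *)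

theory Defs
  imports "HOL-Analysis.Analysis"
begin

text \<open>A string of base-b digits, most significant digit first: X = (d_l,...,d_1).\<close>
definition is_string :: "nat \<Rightarrow> nat list \<Rightarrow> bool" where
  "is_string b X \<longleftrightarrow> set X \<subseteq> {0..<b}"

text \<open>n(X) = sum_{i=1}^{l} d_i b^(i-1); the list element at position j is d_(l-j).\<close>
definition str_val :: "nat \<Rightarrow> nat list \<Rightarrow> nat" where
  "str_val b X = (\<Sum>j<length X. X ! j * b ^ (length X - 1 - j))"

definition mu :: "nat \<Rightarrow> nat \<Rightarrow> nat \<Rightarrow> real set \<Rightarrow> ennreal" where
  "mu b d k A = infsum (\<lambda>X. ennreal (1 / real b ^ length X))
      {X. is_string b X \<and> count_list X d = k \<and> real (str_val b X) / real b ^ length X \<in> A}"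

definition bimal :: "nat \<Rightarrow> real \<Rightarrow> bool" where
  "bimal b x \<longleftrightarrow> (\<exists>l::nat. real b ^ l * x \<in> \<int>)"

end

theory Submission
  imports Defs
begin


lemma str_val_Nil[simp]: "str_val b [] = 0"
  by (simp add: str_val_def)

lemma str_val_Cons[simp]: "str_val b (x # X) = x * b ^ length X + str_val b X"
proof -
  have "str_val b (x # X) = (\<Sum>j<Suc (length X). (x # X) ! j * b ^ (length X - j))"
    by (simp add: str_val_def)
  also have "\<dots> = x * b ^ length X + (\<Sum>j<length X. (x # X) ! Suc j * b ^ (length X - Suc j))"
    by (subst sum.lessThan_Suc_shift) simp
  also have "\<dots> = x * b ^ length X + str_val b X"
    by (simp add: str_val_def)
  finally show ?thesis .
qed

lemma str_val_append: "str_val b (X @ Y) = str_val b X * b ^ length Y + str_val b Y"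
  by (induction X) (auto simp: algebra_simps power_add)

lemma is_string_Cons[simp]: "is_string b (x # X) \<longleftrightarrow> x < b \<and> is_string b X"
  by (auto simp: is_string_def)

lemma is_string_Nil[simp]: "is_string b []"
  by (auto simp: is_string_def)

lemma is_string_append[simp]: "is_string b (X @ Y) \<longleftrightarrow> is_string b X \<and> is_string b Y"
  by (auto simp: is_string_def)

lemma str_val_less: "is_string b X \<Longrightarrow> str_val b X < b ^ length X"
proof (induction X)
  case Nil then show ?case by simp
next
  case (Cons x X)
  then have "x \<le> b - 1" "str_val b X < b ^ length X" by auto
  then have "x * b ^ length X + str_val b X < (b - 1) * b ^ length X + b ^ length X"
    by (meson add_le_less_mono mult_le_mono1)
  also have "\<dots> = b ^ Suc (length X)" using Cons by (cases b) auto
  finally show ?case by simp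
qed

lemma str_val_inj:
  "is_string b X \<Longrightarrow> is_string b Y \<Longrightarrow> length X = length Y \<Longrightarrow> str_val b X = str_val b Y \<Longrightarrow> X = Y"
proof (induction X arbitrary: Y)
  case Nil then show ?case by simp
next
  case (Cons x X)
  from Cons.prems(3) obtain y Y' where Y: "Y = y # Y'" by (cases Y) auto
  let ?n = "length X"
  have l: "length Y' = ?n" using Cons.prems Y by simp
  have v1: "str_val b X < b ^ ?n" "str_val b Y' < b ^ ?n"
    using Cons.prems Y l str_val_less[of b X] str_val_less[of b Y'] by auto
  have e: "x * b ^ ?n + str_val b X = y * b ^ ?n + str_val b Y'" using Cons.prems Y l by simp
  have B: "b ^ ?n > 0" using v1 by linarith
  have "(x * b ^ ?n + str_val b X) div b ^ ?n = x" using v1 B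
    by (metis add.commute add_cancel_right_left div_less div_mult_self1 less_not_refl2)
  moreover have "(y * b ^ ?n + str_val b Y') div b ^ ?n = y" using v1 B
    by (metis add.commute add_cancel_right_left div_less div_mult_self1 less_not_refl2)
  ultimately have "x = y" using e by simp
  with e have "str_val b X = str_val b Y'" by simp
  then have "X = Y'" using Cons.prems Y l Cons.IH[of Y'] by auto
  then show ?case using \<open>x = y\<close> Y by simp
qed

lemma strings_len_card: "card {X. is_string b X \<and> length X = n} = b ^ n"
  using card_lists_length_eq[of "{0..<b}" n] by (simp add: is_string_def)

lemma strings_len_finite: "finite {X. is_string b X \<and> length X = n}"
  using finite_lists_length_eq[of "{0..<b}" n] by (simp add: is_string_def)

lemma str_val_image: "str_val b ` {X. is_string b X \<and> length X = n} = {0..<b ^ n}"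
proof (rule card_subset_eq)
  show "str_val b ` {X. is_string b X \<and> length X = n} \<subseteq> {0..<b ^ n}"
    using str_val_less by fastforce
  have "inj_on (str_val b) {X. is_string b X \<and> length X = n}"
    by (auto intro!: inj_onI str_val_inj)
  then show "card (str_val b ` {X. is_string b X \<and> length X = n}) = card {0..<b ^ n}"
    by (simp add: card_image strings_len_card)
qed simp



lemma has_sum_Sigma_nonneg:
  fixes f :: "'a \<times> 'b \<Rightarrow> real"
  assumes f: "\<And>x. x \<in> A \<Longrightarrow> ((\<lambda>y. f (x, y)) has_sum g x) (B x)"
    and g: "(g has_sum s) A"
    and nn: "\<And>x y. x \<in> A \<Longrightarrow> y \<in> B x \<Longrightarrow> 0 \<le> f (x, y)"
  shows "(f has_sum s) (Sigma A B)"
proof -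
  have "f summable_on Sigma A B"
    by (rule summable_on_SigmaI[OF f has_sum_imp_summable[OF g] nn])
  then show ?thesis using has_sum_SigmaI[where f=f and g=g and A=A and B=B and S=s] f g by blast
qed

lemma has_sum_ennreal_of_real:
  assumes "\<And>x. x \<in> A \<Longrightarrow> 0 \<le> f x" "(f has_sum s) A"
  shows "((\<lambda>x. ennreal (f x)) has_sum ennreal s) A"
proof -
  have "((\<lambda>F. ennreal (sum f F)) \<longlongrightarrow> ennreal s) (finite_subsets_at_top A)"
    using assms by (intro tendsto_ennrealI) (auto simp: has_sum_def)
  moreover have "\<forall>\<^sub>F F in finite_subsets_at_top A. ennreal (sum f F) = sum (\<lambda>x. ennreal (f x)) F"
    using assms(1) by (intro eventually_finite_subsets_at_top_weakI) (auto simp: subset_iff)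
  ultimately show ?thesis unfolding has_sum_def using Lim_transform_eventually by fastforce
qed

definition W :: "nat \<Rightarrow> nat list \<Rightarrow> real" where
  "W b X = 1 / real b ^ length X"

definition Str :: "nat \<Rightarrow> nat \<Rightarrow> nat \<Rightarrow> nat list set" where
  "Str b d m = {X. is_string b X \<and> count_list X d = m}"

lemma W_append: "W b (X @ Y) = W b X * W b Y"
  by (simp add: W_def power_add)

lemma W_nonneg: "0 \<le> W b X"
  by (simp add: W_def)

lemma S0:
  assumes "b \<ge> 2" "d < b"
  shows "(W b has_sum real b) (Str b d 0)"
proof -
  define D where "D = {0..<b} - {d}"
  define L where "L n = {X. set X \<subseteq> D \<and> length X = n}" for n
  have cardD: "card D = b - 1" using assms by (simp add: D_def)
  have finD: "finite D" by (simp add: D_def)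
  have eq: "Str b d 0 = snd ` (SIGMA n:UNIV. L n)"
    by (auto simp: Str_def L_def D_def is_string_def count_list_0_iff image_iff)
  have inj: "inj_on snd (SIGMA n:UNIV. L n)"
    by (auto simp: inj_on_def L_def)
  have inner: "((\<lambda>X. (W b \<circ> snd) (n, X)) has_sum ((real (b - 1) / real b) ^ n)) (L n)" for n
  proof -
    have fin: "finite (L n)" using finite_lists_length_eq[OF finD, of n] by (simp add: L_def)
    have c: "card (L n) = (b - 1) ^ n"
      using card_lists_length_eq[OF finD, of n] cardD by (simp add: L_def)
    have "sum (W b) (L n) = sum (\<lambda>_. 1 / real b ^ n) (L n)"
      by (rule sum.cong) (auto simp: W_def L_def)
    also have "\<dots> = (real (b - 1) / real b) ^ n"
      using c by (simp add: power_divide)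
    finally show ?thesis using has_sum_finite[OF fin, of "W b"] by simp
  qed
  have outer: "((\<lambda>n. (real (b - 1) / real b) ^ n) has_sum real b) UNIV"
  proof -
    have "((\<lambda>n. (real (b - 1) / real b) ^ n) has_sum 1 / (1 - real (b - 1) / real b)) UNIV"
      using assms by (intro sums_nonneg_imp_has_sum geometric_sums) auto
    moreover have "1 / (1 - real (b - 1) / real b) = real b"
      using assms by (simp add: of_nat_diff field_simps)
    ultimately show ?thesis by simp
  qed
  have "((W b \<circ> snd) has_sum real b) (SIGMA n:UNIV. L n)"
    by (rule has_sum_Sigma_nonneg[OF inner outer]) (simp add: W_nonneg)
  then show ?thesis unfolding eq by (simp add: has_sum_reindex[OF inj])
qed

lemma S_Suc_eq:
  assumes "d < b" shows "Str b d (Suc m) = (\<lambda>(A, B). A @ d # B) ` (Str b d 0 \<times> Str b d m)"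
proof
  show "Str b d (Suc m) \<subseteq> (\<lambda>(A, B). A @ d # B) ` (Str b d 0 \<times> Str b d m)"
  proof
    fix X assume X: "X \<in> Str b d (Suc m)"
    then have "count_list X d \<noteq> 0" by (simp add: Str_def)
    then have "d \<in> set X" by (simp add: count_list_0_iff)
    then obtain A B where AB: "X = A @ d # B" "d \<notin> set A" using split_list_first by metis
    then show "X \<in> (\<lambda>(A, B). A @ d # B) ` (Str b d 0 \<times> Str b d m)"
      using X assms by (auto simp: Str_def count_list_0_iff image_iff)
  qed
next
  show "(\<lambda>(A, B). A @ d # B) ` (Str b d 0 \<times> Str b d m) \<subseteq> Str b d (Suc m)"
    using assms by (auto simp: Str_def count_list_0_iff)
qed

lemma S_Suc_inj: "inj_on (\<lambda>(A, B). A @ d # B) (Str b d 0 \<times> Str b d m)"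
proof (rule inj_onI, clarify)
  fix A B A' B'
  assume "A \<in> Str b d 0" "A' \<in> Str b d 0" and e: "A @ d # B = A' @ d # B'"
  then have n: "d \<notin> set A" "d \<notin> set A'" by (auto simp: Str_def count_list_0_iff)
  have "takeWhile (\<lambda>x. x \<noteq> d) (A @ d # B) = A" using n(1) by (induction A) auto
  moreover have "takeWhile (\<lambda>x. x \<noteq> d) (A' @ d # B') = A'" using n(2) by (induction A') auto
  ultimately have "A = A'" using e by simp
  then show "A = A' \<and> B = B'" using e by simp
qed

lemma S_all:
  assumes "b \<ge> 2" "d < b"
  shows "(W b has_sum real b) (Str b d m)"
proof (induction m)
  case 0 then show ?case using S0[OF assms] by simp
next
  case (Suc m)
  have ww: "W b (A @ d # B) = (1 / real b * W b A) * W b B" for A B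
    using W_append[of b A "[d] @ B"] W_append[of b "[d]" B] by (simp add: W_def mult_ac)
  have inner: "((\<lambda>B. (W b \<circ> (\<lambda>(A, B). A @ d # B)) (A, B)) has_sum (1 / real b * W b A) * real b) (Str b d m)" for A
  proof -
    have "(\<lambda>B. (W b \<circ> (\<lambda>(A, B). A @ d # B)) (A, B)) = (\<lambda>B. (1 / real b * W b A) * W b B)"
      by (simp add: ww)
    then show ?thesis using has_sum_cmult_right[OF Suc, of "1 / real b * W b A"] by simp
  qed
  have outer: "((\<lambda>A. (1 / real b * W b A) * real b) has_sum real b) (Str b d 0)"
    using S0[OF assms] assms by simp
  have "((W b \<circ> (\<lambda>(A, B). A @ d # B)) has_sum real b) (Str b d 0 \<times> Str b d m)"
    by (rule has_sum_Sigma_nonneg[OF inner outer]) (simp add: W_nonneg)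
  then show ?case unfolding S_Suc_eq[OF assms(2)] by (simp add: has_sum_reindex[OF S_Suc_inj])
qed



definition pt :: "nat \<Rightarrow> nat list \<Rightarrow> real" where
  "pt b X = real (str_val b X) / real b ^ length X"

lemma floor_key:
  assumes "b \<ge> 2" "is_string b X" "l \<le> length X"
  shows "\<lfloor>real b ^ l * pt b X\<rfloor> = int (str_val b (take l X))"
proof -
  define J where "J = take l X"
  define Y where "Y = drop l X"
  have X: "X = J @ Y" by (simp add: J_def Y_def)
  have lJ: "length J = l" using assms by (simp add: J_def)
  have sY: "is_string b Y" using assms X by simp
  define m where "m = length Y"
  have bm: "real b ^ m > 0" using assms by simp
  have lt: "real (str_val b Y) < real b ^ m"
    using str_val_less[OF sY] unfolding m_def by (metis of_nat_less_iff of_nat_power)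
  have "real b ^ l * pt b X = real (str_val b J) + real (str_val b Y) / real b ^ m"
    using assms bm unfolding pt_def X str_val_append lJ m_def
    by (simp add: power_add field_simps lJ)
  moreover have "0 \<le> real (str_val b Y) / real b ^ m" "real (str_val b Y) / real b ^ m < 1"
    using bm lt by (auto simp: field_simps)
  ultimately show ?thesis unfolding J_def[symmetric] by (simp add: floor_eq_iff)
qed

lemma mem_iff:
  assumes "b \<ge> 2" "real b ^ l * t = of_int a" "real b ^ l * u = of_int c"
    "is_string b X" "l \<le> length X"
  shows "pt b X \<in> {t..<u} \<longleftrightarrow> a \<le> int (str_val b (take l X)) \<and> int (str_val b (take l X)) < c"
proof -
  have bl: "real b ^ l > 0" using assms by simp
  have "t \<le> pt b X \<longleftrightarrow> of_int a \<le> real b ^ l * pt b X"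
    using bl assms(2) by (metis mult_le_cancel_left_pos)
  also have "\<dots> \<longleftrightarrow> a \<le> \<lfloor>real b ^ l * pt b X\<rfloor>" by (simp add: le_floor_iff)
  finally have 1: "t \<le> pt b X \<longleftrightarrow> a \<le> int (str_val b (take l X))"
    using floor_key[OF assms(1,4,5)] by simp
  have "pt b X < u \<longleftrightarrow> real b ^ l * pt b X < of_int c"
    using bl assms(3) by (metis mult_less_cancel_left_pos)
  also have "\<dots> \<longleftrightarrow> \<lfloor>real b ^ l * pt b X\<rfloor> < c" by (simp add: floor_less_iff)
  finally have 2: "pt b X < u \<longleftrightarrow> int (str_val b (take l X)) < c"
    using floor_key[OF assms(1,4,5)] by simp
  show ?thesis using 1 2 by auto
qed

lemma part1:
  assumes b: "b \<ge> 2" and d: "d < b"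
    and ta: "real b ^ l * t = of_int a" and uc: "real b ^ l * u = of_int c"
    and t0: "0 \<le> t" and tu: "t < u" and u1: "u \<le> 1" and lk: "l \<le> k"
  shows "mu b d k {t..<u} = ennreal (real b * (u - t))"
proof -
  define A where "A = {X. is_string b X \<and> count_list X d = k \<and> pt b X \<in> {t..<u}}"
  define G where "G = {J. is_string b J \<and> length J = l \<and> a \<le> int (str_val b J) \<and> int (str_val b J) < c}"
  define SS where "SS = (SIGMA J:G. Str b d (k - count_list J d))"
  have bl: "real b ^ l > 0" using b by simp
  have a0: "0 \<le> a"
  proof -
    have "0 \<le> real b ^ l * t" using bl t0 by simp
    then show ?thesis using ta by simp
  qed
  have cb: "c \<le> int (b ^ l)"
  proof -
    have "real b ^ l * u \<le> real b ^ l" using bl u1 by simp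
    then have "real_of_int c \<le> real (b ^ l)" using uc by simp
    then show ?thesis by linarith
  qed
  have ac: "a < c"
  proof -
    have "real b ^ l * t < real b ^ l * u" using bl tu by simp
    then show ?thesis using ta uc by simp
  qed
  have eqA: "A = (\<lambda>(J, Y). J @ Y) ` SS"
  proof
    show "A \<subseteq> (\<lambda>(J, Y). J @ Y) ` SS"
    proof
      fix X assume X: "X \<in> A"
      then have sX: "is_string b X" and cX: "count_list X d = k" and pX: "pt b X \<in> {t..<u}"
        by (auto simp: A_def)
      have lX: "l \<le> length X" using cX lk count_le_length[of X d] by simp
      have XX: "X = take l X @ drop l X" by simp
      have sJ: "is_string b (take l X)" "is_string b (drop l X)"
        using sX XX by (metis is_string_append)+
      have "take l X \<in> G"
        using mem_iff[OF b ta uc sX lX] pX sJ lX by (simp add: G_def)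
      moreover have "drop l X \<in> Str b d (k - count_list (take l X) d)"
        using cX sJ count_list_append[of "take l X" "drop l X" d] by (simp add: Str_def)
      ultimately show "X \<in> (\<lambda>(J, Y). J @ Y) ` SS"
        unfolding SS_def by (intro image_eqI[where x="(take l X, drop l X)"]) auto
    qed
  next
    show "(\<lambda>(J, Y). J @ Y) ` SS \<subseteq> A"
    proof clarify
      fix J Y assume "(J, Y) \<in> SS"
      then have J: "J \<in> G" and Y: "Y \<in> Str b d (k - count_list J d)" by (auto simp: SS_def)
      have lJ: "length J = l" and sJ: "is_string b J" using J by (auto simp: G_def)
      have cJ: "count_list J d \<le> k" using count_le_length[of J d] lJ lk by simp
      have sY: "is_string b Y" and cY: "count_list Y d = k - count_list J d" using Y by (auto simp: Str_def)
      have "pt b (J @ Y) \<in> {t..<u}"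
        using mem_iff[OF b ta uc, of "J @ Y"] sJ sY lJ J by (simp add: G_def)
      then show "J @ Y \<in> A" using sJ sY cJ cY by (simp add: A_def)
    qed
  qed
  have inj: "inj_on (\<lambda>(J, Y). J @ Y) SS"
    by (auto simp: inj_on_def SS_def G_def)
  have finG: "finite G"
    by (rule finite_subset[OF _ strings_len_finite[of b l]]) (auto simp: G_def)
  have cardG: "card G = nat c - nat a"
  proof -
    have injG: "inj_on (str_val b) G" by (auto intro!: inj_onI str_val_inj simp: G_def)
    have "str_val b ` G = {nat a..<nat c}"
    proof
      show "str_val b ` G \<subseteq> {nat a..<nat c}" by (auto simp: G_def)
    next
      show "{nat a..<nat c} \<subseteq> str_val b ` G"
      proof
        fix n assume n: "n \<in> {nat a..<nat c}"
        then have "int n < c" by auto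
        then have "int n < int (b ^ l)" using cb by linarith
        then have "n \<in> {0..<b ^ l}" by simp
        then have "n \<in> str_val b ` {X. is_string b X \<and> length X = l}"
          by (simp only: str_val_image)
        then obtain J where "J \<in> {X. is_string b X \<and> length X = l}" "n = str_val b J"
          by blast
        then show "n \<in> str_val b ` G" using n a0 by (auto simp: G_def)
      qed
    qed
    then show ?thesis using card_image[OF injG] by simp
  qed
  have inner: "((\<lambda>Y. (W b \<circ> (\<lambda>(J, Y). J @ Y)) (J, Y)) has_sum W b J * real b) (Str b d (k - count_list J d))" for J
    using has_sum_cmult_right[OF S_all[OF b d], of "W b J"] by (simp add: W_append)
  have outer: "((\<lambda>J. W b J * real b) has_sum real b * (u - t)) G"
  proof -
    have "sum (\<lambda>J. W b J * real b) G = sum (\<lambda>J. real b / real b ^ l) G"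
      by (rule sum.cong) (auto simp: W_def G_def)
    also have "\<dots> = real (nat c - nat a) * real b / real b ^ l" using cardG by simp
    also have "real (nat c - nat a) = real_of_int c - real_of_int a" using a0 ac by simp
    also have "(real_of_int c - real_of_int a) * real b / real b ^ l = real b * (u - t)"
      using bl by (simp add: ta[symmetric] uc[symmetric] field_simps)
    finally show ?thesis using has_sum_finite[OF finG, of "\<lambda>J. W b J * real b"] by simp
  qed
  have "((W b \<circ> (\<lambda>(J, Y). J @ Y)) has_sum real b * (u - t)) SS"
    unfolding SS_def by (rule has_sum_Sigma_nonneg[OF inner outer]) (simp add: W_nonneg)
  then have "(W b has_sum real b * (u - t)) A"
    unfolding eqA by (simp add: has_sum_reindex[OF inj])
  then have "((\<lambda>X. ennreal (W b X)) has_sum ennreal (real b * (u - t))) A"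
    by (rule has_sum_ennreal_of_real[rotated]) (simp add: W_nonneg)
  moreover have "mu b d k {t..<u} = infsum (\<lambda>X. ennreal (W b X)) A"
    by (simp add: mu_def A_def W_def pt_def)
  ultimately show ?thesis by (simp add: infsumI)
qed



lemma mu_mono: "A \<subseteq> B \<Longrightarrow> mu b d k A \<le> mu b d k B"
  unfolding mu_def
  by (rule infsum_mono_neutral) (auto intro: nonneg_summable_on_complete)

lemma interval_mem:
  fixes I :: "real set"
  assumes "is_interval I" "I \<noteq> {}" "bdd_below I" "bdd_above I" "Inf I < x" "x < Sup I"
  shows "x \<in> I"
proof -
  obtain y where y: "y \<in> I" "y < x" using assms cInf_less_iff by metis
  obtain z where z: "z \<in> I" "x < z" using assms less_cSup_iff by metis
  show ?thesis using assms(1) y z unfolding is_interval_1 by (meson less_imp_le)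
qed

lemma part2:
  fixes I :: "real set"
  assumes b: "b \<ge> 2" and d: "d < b"
    and I: "is_interval I" "I \<noteq> {}" "I \<subseteq> {0..<1}"
  shows "(\<lambda>k. mu b d k I) \<longlonglongrightarrow> ennreal (real b * (Sup I - Inf I))"
proof -
  define s where "s = Sup I"
  define i where "i = Inf I"
  have bb: "bdd_below I" "bdd_above I" using I(3) by (auto intro!: bdd_belowI[of _ 0] bdd_aboveI[of _ 1])
  obtain x0 where x0: "x0 \<in> I" using I by blast
  have i0: "0 \<le> i" unfolding i_def using I by (intro cInf_greatest) auto
  have s1: "s \<le> 1" unfolding s_def using I by (intro cSup_least) auto
  have is_: "i \<le> x0" "x0 \<le> s" using x0 bb by (auto simp: i_def s_def intro: cInf_lower cSup_upper)
  have i1: "i < 1" using is_ x0 I(3) by auto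
  have Ii: "\<And>x. x \<in> I \<Longrightarrow> i \<le> x" using bb by (auto simp: i_def intro: cInf_lower)
  have Is: "\<And>x. x \<in> I \<Longrightarrow> x \<le> s" using bb by (auto simp: s_def intro: cSup_upper)
  have fin: "mu b d k I \<le> ennreal (real b)" for k
  proof -
    have "mu b d k I \<le> mu b d k {0..<1}" using I(3) by (rule mu_mono)
    also have "\<dots> = ennreal (real b * (1 - 0))"
      by (rule part1[OF b d, where l=0 and a=0 and c=1]) auto
    finally show ?thesis by simp
  qed
  define r where "r k = enn2real (mu b d k I)" for k
  have mur: "mu b d k I = ennreal (r k)" for k
    using fin[of k] unfolding r_def by (simp add: ennreal_enn2real le_less_trans[OF _ ennreal_less_top])
  have r0: "0 \<le> r k" for k by (simp add: r_def)
  have bounds: "\<bar>r k - real b * (s - i)\<bar> \<le> 2 * real b / real b ^ L" if kL: "L \<le> k" for k L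
  proof -
    define B where "B = real b ^ L"
    have B0: "B > 0" using b by (simp add: B_def)
    define lo where "lo = \<lfloor>B * i\<rfloor> + 1"
    define hi where "hi = \<lfloor>B * s\<rfloor>"
    define lo' where "lo' = \<lfloor>B * i\<rfloor>"
    define hi' where "hi' = min (\<lfloor>B * s\<rfloor> + 1) (int (b ^ L))"
    have lo_ge: "B * i < of_int lo" unfolding lo_def by linarith
    have hi_le: "of_int hi \<le> B * s" "B * s < of_int hi + 1" unfolding hi_def by linarith+
    have lo'_le: "of_int lo' \<le> B * i" "B * i < of_int lo' + 1" unfolding lo'_def by linarith+
    have hi'1: "of_int hi' \<le> B * s + 1" unfolding hi'_def by linarith
    have hi'2: "of_int hi' \<le> B"
    proof -
      have "hi' \<le> int (b ^ L)" by (simp add: hi'_def)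
      then have "real_of_int hi' \<le> real_of_int (int (b ^ L))" by (simp only: of_int_le_iff)
      then show ?thesis by (simp add: B_def)
    qed
    have hi'3: "B * x < of_int hi'" if x: "x \<in> I" for x
    proof -
      have "B * x \<le> B * s" using Is[OF x] B0 by simp
      then have 1: "B * x < of_int (\<lfloor>B * s\<rfloor> + 1)" by linarith
      have "x < 1" using x I(3) by auto
      then have 2: "B * x < real_of_int (int (b ^ L))" using B0 by (simp add: B_def)
      show ?thesis using 1 2 unfolding hi'_def by (simp add: min_def)
    qed
    have upper: "r k \<le> real b * (s - i) + 2 * real b / B"
    proof -
      have sub: "I \<subseteq> {of_int lo' / B..<of_int hi' / B}"
      proof
        fix x assume x: "x \<in> I"
        have "of_int lo' \<le> B * x" using lo'_le Ii[OF x] B0 by (smt (verit) mult_left_mono)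
        moreover have "B * x < of_int hi'" using hi'3[OF x] .
        ultimately show "x \<in> {of_int lo' / B..<of_int hi' / B}" using B0 by (simp add: field_simps)
      qed
      have lt: "of_int lo' / B < of_int hi' / B"
      proof -
        have "of_int lo' \<le> B * x0" using lo'_le is_ B0 by (smt (verit) mult_left_mono)
        then show ?thesis using hi'3[OF x0] B0 by (simp add: divide_strict_right_mono)
      qed
      have "mu b d k I \<le> mu b d k {of_int lo' / B..<of_int hi' / B}" by (rule mu_mono[OF sub])
      also have "\<dots> = ennreal (real b * (of_int hi' / B - of_int lo' / B))"
      proof (rule part1[OF b d, where l=L])
        show "real b ^ L * (of_int lo' / B) = of_int lo'" using B0 by (simp add: B_def)
        show "real b ^ L * (of_int hi' / B) = of_int hi'" using B0 by (simp add: B_def)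
        show "0 \<le> of_int lo' / B" using B0 i0 lo'_le by (simp add: lo'_def)
        show "of_int hi' / B \<le> 1" using hi'2 B0 by simp
      qed (use lt kL in auto)
      finally have "r k \<le> real b * (of_int hi' / B - of_int lo' / B)"
        using mur[of k] lt b by simp
      also have "\<dots> \<le> real b * (s - i) + 2 * real b / B"
      proof -
        have "of_int hi' - of_int lo' \<le> B * (s - i) + 2"
          using hi'1 lo'_le by (simp add: right_diff_distrib)
        then have "(of_int hi' - of_int lo') / B \<le> (B * (s - i) + 2) / B"
          using B0 by (intro divide_right_mono) auto
        then have "of_int hi' / B - of_int lo' / B \<le> (s - i) + 2 / B"
          using B0 by (simp add: diff_divide_distrib add_divide_distrib)
        then have "real b * (of_int hi' / B - of_int lo' / B) \<le> real b * ((s - i) + 2 / B)"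
          by (rule mult_left_mono) simp
        then show ?thesis by (simp add: distrib_left mult.commute)
      qed
      finally show ?thesis .
    qed
    have lower: "real b * (s - i) - 2 * real b / B \<le> r k"
    proof (cases "lo < hi")
      case True
      have sub: "{of_int lo / B..<of_int hi / B} \<subseteq> I"
      proof
        fix x assume x: "x \<in> {of_int lo / B..<of_int hi / B}"
        then have "of_int lo \<le> B * x" "B * x < of_int hi" using B0 by (auto simp: field_simps)
        then have "B * i < B * x" "B * x < B * s" using lo_ge hi_le by linarith+
        then have "i < x" "x < s" using B0 by auto
        then show "x \<in> I" using interval_mem[OF I(1,2) bb] by (simp add: i_def s_def)
      qed
      have lt: "of_int lo / B < of_int hi / B" using True B0 by (simp add: divide_strict_right_mono)
      have "ennreal (real b * (of_int hi / B - of_int lo / B)) = mu b d k {of_int lo / B..<of_int hi / B}"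
      proof (rule part1[OF b d, where l=L, symmetric])
        show "real b ^ L * (of_int lo / B) = of_int lo" using B0 by (simp add: B_def)
        show "real b ^ L * (of_int hi / B) = of_int hi" using B0 by (simp add: B_def)
        have "0 \<le> B * i" using B0 i0 by simp
        then have "0 \<le> real_of_int lo" using lo_ge by linarith
        then show "0 \<le> of_int lo / B" using B0 by simp
        have "B * s \<le> B * 1" using s1 B0 by (intro mult_left_mono) auto
        then have "of_int hi \<le> B" using hi_le by linarith
        then show "of_int hi / B \<le> 1" using B0 by simp
      qed (use lt kL in auto)
      also have "\<dots> \<le> mu b d k I" by (rule mu_mono[OF sub])
      finally have "real b * (of_int hi / B - of_int lo / B) \<le> r k"
        using mur[of k] r0[of k] by simp
      moreover have "real b * (s - i) - 2 * real b / B \<le> real b * (of_int hi / B - of_int lo / B)"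
      proof -
        have "of_int lo \<le> B * i + 1" unfolding lo_def by linarith
        then have "B * (s - i) - 2 \<le> of_int hi - of_int lo"
          using hi_le by (simp add: right_diff_distrib)
        then have "(B * (s - i) - 2) / B \<le> (of_int hi - of_int lo) / B"
          using B0 by (intro divide_right_mono) auto
        then have "s - i - 2 / B \<le> of_int hi / B - of_int lo / B"
          using B0 by (simp add: diff_divide_distrib)
        then have "real b * (s - i - 2 / B) \<le> real b * (of_int hi / B - of_int lo / B)"
          by (rule mult_left_mono) simp
        then show ?thesis by (simp add: right_diff_distrib mult.commute)
      qed
      ultimately show ?thesis by linarith
    next
      case False
      then have "B * s - 1 < B * i + 1" using hi_le lo_ge unfolding lo_def by linarith
      then have "s - i < 2 / B" using B0 by (simp add: field_simps)
      then have "real b * (s - i) \<le> real b * (2 / B)" using b by (intro mult_left_mono) auto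
      then show ?thesis using r0[of k] by simp
    qed
    show ?thesis using upper lower by (simp add: B_def abs_le_iff)
  qed
  have "r \<longlonglongrightarrow> real b * (s - i)"
  proof (rule LIMSEQ_I)
    fix e :: real assume e: "0 < e"
    obtain L where L: "2 * real b / e < real b ^ L" using real_arch_pow[of "real b" "2 * real b / e"] b by auto
    have "2 * real b / real b ^ L < e"
      using L e b by (simp add: field_simps)
    then show "\<exists>no. \<forall>n\<ge>no. norm (r n - real b * (s - i)) < e"
      using bounds by (intro exI[of _ L]) (auto intro: le_less_trans)
  qed
  then have "(\<lambda>k. ennreal (r k)) \<longlonglongrightarrow> ennreal (real b * (s - i))" by (rule tendsto_ennrealI)
  then show ?thesis by (simp add: mur s_def i_def)
qed


theorem mainTheorem15:
  fixes b d :: nat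
  assumes "b \<ge> 2" and "d < b"
  shows "(\<forall>(t::real) (u::real) (l'::nat) (k::nat).
            bimal b t \<and> bimal b u \<and> t < u \<and> 0 \<le> t \<and> u \<le> 1 \<and>
            real b ^ l' * t \<in> \<int> \<and> real b ^ l' * u \<in> \<int> \<and> k \<ge> l'
            \<longrightarrow> mu b d k {t..<u} = ennreal (real b * (u - t)))
       \<and> (\<forall>I::real set. is_interval I \<and> I \<noteq> {} \<and> I \<subseteq> {0..<1}
            \<longrightarrow> (\<lambda>k. mu b d k I) \<longlonglongrightarrow> ennreal (real b * (Sup I - Inf I)))"
proof (intro conjI allI impI)
  fix t u :: real and l' k :: nat
  assume H: "bimal b t \<and> bimal b u \<and> t < u \<and> 0 \<le> t \<and> u \<le> 1 \<and>
            real b ^ l' * t \<in> \<int> \<and> real b ^ l' * u \<in> \<int> \<and> k \<ge> l'"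
  then obtain a where a: "real b ^ l' * t = of_int a" by (auto elim: Ints_cases)
  from H obtain c where c: "real b ^ l' * u = of_int c" by (auto elim: Ints_cases)
  show "mu b d k {t..<u} = ennreal (real b * (u - t))"
    using part1[OF assms a c] H by auto
next
  fix I :: "real set"
  assume "is_interval I \<and> I \<noteq> {} \<and> I \<subseteq> {0..<1}"
  then show "(\<lambda>k. mu b d k I) \<longlonglongrightarrow> ennreal (real b * (Sup I - Inf I))"
    using part2[OF assms] by auto
qed

end
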